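(* Let $N\ge2$, $d\in\mathbb{N}^*$, $\alpha>0$, $A\in\mathbb{R}_+^{N\times N}$ with $A_{ij}>0$ only if $j<i$ and, for all $i>1$, some $j<i$ with $A_{ij}>0$. Let $\psi(r)=(1+r^2)^{-\beta/2}$ with $\beta\ge0$. Consider solutions on $\mathbb{R}_+$ of $\frac{dx_i}{dt}=v_i$, $\frac{dv_i}{dt}=\alpha\sum_{j\ne i}Q_t(i,j)(v_j-v_i)$ with either (CS) $Q_t(i,j)=A_{ij}\psi(\|x_j(t)-x_i(t)\|_2)$, or (MT) $Q_t(i,j)=\dfrac{A_{ij}\psi(\|x_i(t)-x_j(t)\|_2)}{a_i+\sum_{k\ne i}A_{ik}\psi(\|x_i(t)-x_k(t)\|_2)}$, with $a\in\mathbb{R}_+^N$ such that $a_i>0$ whenever $A_{ij}=0$ for all $j\ne i$. For (CS), flocking occurs if: (i) $\beta<1$ (for every initial condition); or (ii) $\beta=1$ and $V(0)<C_{HL}$; or (iii) $\beta>1$ and $V(0)<C_{HL}\dfrac{r^*-X(0)}{(1+{r^*}^2)^{\beta/2}}$ with $r^*=\dfrac{\sqrt{(\beta X(0))^2+4(\beta-1)}+\beta X(0)}{2(\beta-1)}$. For (MT), flocking occurs if: (i) $\bar a=0$ or $\beta<1$ (for every initial condition); or (ii) $\bar a>0$, $\beta=1$ and $V(0)<M_{HL}\dfrac{\bar a+A_*}{\bar a}$; or (iii) $\bar a>0$, $\beta>1$ and $V(0)<M_{HL}\dfrac{(\bar a+A_* )(r^*-X(0))}{A_*+\bar a(1+{r^*}^2)^{\beta/2}}$,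 where $r^*$ is the solution on $[X(0),+\infty)$ of $(1-\beta)r^2+\beta X(0)r+1=-\frac{A_*}{\bar a}(1+r^2)^{1-\beta/2}$.
   Context: Graph: vertices $\{1,\dots,N\}$, edge $i\to j$ iff $i\ne j$ and $A_{ij}>0$; for $i>1$, $h_i$ is the maximal length (number of edges) of a path from $i$ to $1$, and $H=\sup_{i>1}h_i$. $A_*=\inf_{i>1}\sum_{j\ne i}A_{ij}$, $B_{ij}=A_{ij}/(a_i+\sum_{k\ne i}A_{ik})$, $B_*=\inf_{i>1}\sum_{j\ne i}B_{ij}$, $C_{HL}=\alpha A_*/H$, $M_{HL}=\alpha B_*/H$, $\bar a=\sup_{i>1}a_i$. $X(t)=\sup_{i,j}\|x_i(t)-x_j(t)\|_2$, $V(t)=\sup_{i,j}\|v_i(t)-v_j(t)\|_2$; flocking means $\sup_tX(t)<\infty$ and $V(t)\to0$. *)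

theory Defs
  imports "HOL-Analysis.Analysis"
begin

text \<open>Agents are indexed by 1..N; A and a are given as functions on indices.\<close>

definition psi :: "real \<Rightarrow> real \<Rightarrow> real" where
  "psi \<beta> r = (1 + r\<^sup>2) powr (-\<beta>/2)"

definition edge :: "nat \<Rightarrow> (nat \<Rightarrow> nat \<Rightarrow> real) \<Rightarrow> nat \<Rightarrow> nat \<Rightarrow> bool" where
  "edge N A i j \<longleftrightarrow> i \<in> {1..N} \<and> j \<in> {1..N} \<and> i \<noteq> j \<and> A i j > 0"

definition path_to_1 :: "nat \<Rightarrow> (nat \<Rightarrow> nat \<Rightarrow> real) \<Rightarrow> nat \<Rightarrow> nat \<Rightarrow> bool" where
  "path_to_1 N A i k \<longleftrightarrow> (\<exists>p::nat \<Rightarrow> nat. p 0 = i \<and> p k = 1 \<and>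
      (\<forall>m<k. edge N A (p m) (p (Suc m))))"

definition hh :: "nat \<Rightarrow> (nat \<Rightarrow> nat \<Rightarrow> real) \<Rightarrow> nat \<Rightarrow> nat" where
  "hh N A i = Max {k. path_to_1 N A i k}"

definition HH :: "nat \<Rightarrow> (nat \<Rightarrow> nat \<Rightarrow> real) \<Rightarrow> nat" where
  "HH N A = Max (hh N A ` {2..N})"

definition Astar :: "nat \<Rightarrow> (nat \<Rightarrow> nat \<Rightarrow> real) \<Rightarrow> real" where
  "Astar N A = Min ((\<lambda>i. \<Sum>j\<in>{1..N}-{i}. A i j) ` {2..N})"

definition Bmat :: "nat \<Rightarrow> (nat \<Rightarrow> nat \<Rightarrow> real) \<Rightarrow> (nat \<Rightarrow> real) \<Rightarrow> nat \<Rightarrow> nat \<Rightarrow> real" where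
  "Bmat N A a i j = A i j / (a i + (\<Sum>k\<in>{1..N}-{i}. A i k))"

definition Bstar :: "nat \<Rightarrow> (nat \<Rightarrow> nat \<Rightarrow> real) \<Rightarrow> (nat \<Rightarrow> real) \<Rightarrow> real" where
  "Bstar N A a = Min ((\<lambda>i. \<Sum>j\<in>{1..N}-{i}. Bmat N A a i j) ` {2..N})"

definition C_HL :: "nat \<Rightarrow> real \<Rightarrow> (nat \<Rightarrow> nat \<Rightarrow> real) \<Rightarrow> real" where
  "C_HL N \<alpha> A = \<alpha> * Astar N A / real (HH N A)"

definition M_HL :: "nat \<Rightarrow> real \<Rightarrow> (nat \<Rightarrow> nat \<Rightarrow> real) \<Rightarrow> (nat \<Rightarrow> real) \<Rightarrow> real" where
  "M_HL N \<alpha> A a = \<alpha> * Bstar N A a / real (HH N A)"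

definition abar :: "nat \<Rightarrow> (nat \<Rightarrow> real) \<Rightarrow> real" where
  "abar N a = Max (a ` {2..N})"

definition diam :: "nat \<Rightarrow> (nat \<Rightarrow> real \<Rightarrow> 'a::euclidean_space) \<Rightarrow> real \<Rightarrow> real" where
  "diam N x t = Max {norm (x i t - x j t) | i j. i \<in> {1..N} \<and> j \<in> {1..N}}"

definition CS_solution :: "nat \<Rightarrow> real \<Rightarrow> (nat \<Rightarrow> nat \<Rightarrow> real) \<Rightarrow> real \<Rightarrow>
    (nat \<Rightarrow> real \<Rightarrow> 'a::euclidean_space) \<Rightarrow> (nat \<Rightarrow> real \<Rightarrow> 'a) \<Rightarrow> bool" where
  "CS_solution N \<alpha> A \<beta> x v \<longleftrightarrow> (\<forall>i\<in>{1..N}. \<forall>t\<ge>0.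
     (x i has_vector_derivative v i t) (at t within {0..}) \<and>
     (v i has_vector_derivative
        (\<alpha> *\<^sub>R (\<Sum>j\<in>{1..N}-{i}. (A i j * psi \<beta> (norm (x j t - x i t))) *\<^sub>R (v j t - v i t))))
        (at t within {0..}))"

definition MT_solution :: "nat \<Rightarrow> real \<Rightarrow> (nat \<Rightarrow> nat \<Rightarrow> real) \<Rightarrow> (nat \<Rightarrow> real) \<Rightarrow> real \<Rightarrow>
    (nat \<Rightarrow> real \<Rightarrow> 'a::euclidean_space) \<Rightarrow> (nat \<Rightarrow> real \<Rightarrow> 'a) \<Rightarrow> bool" where
  "MT_solution N \<alpha> A a \<beta> x v \<longleftrightarrow> (\<forall>i\<in>{1..N}. \<forall>t\<ge>0.
     (x i has_vector_derivative v i t) (at t within {0..}) \<and>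
     (v i has_vector_derivative
        (\<alpha> *\<^sub>R (\<Sum>j\<in>{1..N}-{i}.
           (A i j * psi \<beta> (norm (x i t - x j t)) /
             (a i + (\<Sum>k\<in>{1..N}-{i}. A i k * psi \<beta> (norm (x i t - x k t)))))
           *\<^sub>R (v j t - v i t))))
        (at t within {0..}))"

definition flocking :: "nat \<Rightarrow> (nat \<Rightarrow> real \<Rightarrow> 'a::euclidean_space) \<Rightarrow> (nat \<Rightarrow> real \<Rightarrow> 'a) \<Rightarrow> bool" where
  "flocking N x v \<longleftrightarrow> (\<exists>B. \<forall>t\<ge>0. diam N x t \<le> B) \<and> ((\<lambda>t. diam N v t) \<longlongrightarrow> 0) at_top"

end

theory Submission
  imports Defs
begin


lemma barrier:
  fixes D D' :: "real \<Rightarrow> real"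
  assumes T: "0 \<le> T" and cont: "continuous_on {0..T} D" and D0: "D 0 \<le> 0"
    and der: "\<And>s. 0 < s \<Longrightarrow> s < T \<Longrightarrow> (D has_real_derivative D' s) (at s)"
    and neg: "\<And>s. 0 < s \<Longrightarrow> s < T \<Longrightarrow> D s > 0 \<Longrightarrow> D' s \<le> 0"
  shows "D T \<le> 0"
proof (rule ccontr)
  assume DT: "\<not> D T \<le> 0"
  define S where "S = {0..T} \<inter> D -` {..0}"
  have cS: "closed S" unfolding S_def by (rule continuous_closed_preimage[OF cont]) auto
  have neS: "S \<noteq> {}" using T D0 unfolding S_def by auto
  have bS: "bdd_above S" unfolding S_def by (auto intro: bdd_aboveI[where M=T])
  define s0 where "s0 = Sup S"
  have s0S: "s0 \<in> S" unfolding s0_def using closed_contains_Sup[OF neS bS cS] .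
  then have s0: "0 \<le> s0" "s0 \<le> T" "D s0 \<le> 0" unfolding S_def by auto
  have s0T: "s0 < T" using s0 DT by (metis order_le_less)
  have pos: "D s > 0" if "s0 < s" "s \<le> T" for s
  proof (rule ccontr)
    assume "\<not> D s > 0"
    then have "s \<in> S" using that s0 unfolding S_def by auto
    then have "s \<le> s0" unfolding s0_def using bS by (rule cSup_upper)
    then show False using that by simp
  qed
  have "continuous_on {s0..T} D" using s0 by (intro continuous_on_subset[OF cont]) auto
  moreover have "D differentiable at x" if "s0 < x" "x < T" for x
    using der[of x] that s0 real_differentiable_def by force
  ultimately obtain l z where z: "s0 < z" "z < T" "(D has_real_derivative l) (at z)"
      "D T - D s0 = (T - s0) * l"
    using MVT[OF s0T] by blast
  have "l = D' z" using DERIV_unique[OF z(3) der[of z]] z s0 by simp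
  then have "l \<le> 0" using neg[of z] pos[of z] z s0 by simp
  then have "(T - s0) * l \<le> 0" using s0T by (intro mult_nonneg_nonpos) auto
  then have "D T \<le> D s0" using z(4) by linarith
  then show False using s0 DT by simp
qed

definition gg :: "real \<Rightarrow> nat \<Rightarrow> real \<Rightarrow> real" where
  "gg l k t = (\<Sum>m<k. exp (-(l*t)) * (l*t)^m / fact m)"

definition GG :: "real \<Rightarrow> nat \<Rightarrow> real \<Rightarrow> real" where
  "GG l k t = (\<Sum>j<k. (1 - gg l (Suc j) t) / l)"

lemma gg0[simp]: "gg l 0 t = 0" by (simp add: gg_def)

lemma gg_Suc: "gg l (Suc k) t = gg l k t + exp (-(l*t)) * (l*t)^k / fact k"
  by (simp add: gg_def)

lemma gg_nonneg: "0 \<le> l \<Longrightarrow> 0 \<le> t \<Longrightarrow> 0 \<le> gg l k t"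
  unfolding gg_def by (intro sum_nonneg) auto

lemma gg_mono: "0 \<le> l \<Longrightarrow> 0 \<le> t \<Longrightarrow> k \<le> k' \<Longrightarrow> gg l k t \<le> gg l k' t"
  unfolding gg_def by (intro sum_mono2) auto

lemma gg_at0: "1 \<le> k \<Longrightarrow> gg l k 0 = 1"
proof -
  assume "1 \<le> k"
  then obtain m where k: "k = Suc m" by (cases k) auto
  have "gg l (Suc m) 0 = 1" by (induction m) (simp_all add: gg_Suc)
  then show ?thesis using k by simp
qed

lemma term_deriv: "((\<lambda>t. exp (-(l*t)) * (l*t)^(Suc k) / fact (Suc k)) has_real_derivative
      (l * (exp (-(l*t)) * (l*t)^k / fact k - exp (-(l*t)) * (l*t)^(Suc k) / fact (Suc k)))) (at t)"
proof -
  have fp: "(fact k::real) > 0" by simp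
  have f: "real (Suc k) / (fact (Suc k)::real) = 1 / fact k"
    using fp by (simp add: fact_Suc del: of_nat_Suc)
  have d: "((\<lambda>t. exp(-(l*t)) * (l*t)^(Suc k)) has_real_derivative (exp(-(l*t))*(-l)*(l*t)^(Suc k) + exp(-(l*t))*(real (Suc k) * (l*t)^k * l))) (at t)"
    apply (rule derivative_eq_intros refl)+
    apply (simp add: algebra_simps)
    done
  have eq: "(exp(-(l*t))*(-l)*(l*t)^(Suc k) + exp(-(l*t))*(real (Suc k) * (l*t)^k * l)) / fact (Suc k)
     = l * (exp (-(l*t)) * (l*t)^k / fact k - exp (-(l*t)) * (l*t)^(Suc k) / fact (Suc k))"
  proof -
    have "exp(-(l*t))*(real (Suc k) * (l*t)^k * l) / fact (Suc k) = exp(-(l*t)) * (l*t)^k * l * (real (Suc k) / fact (Suc k))"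
      by simp
    also have "\<dots> = l * (exp (-(l*t)) * (l*t)^k / fact k)" unfolding f by simp
    finally show ?thesis unfolding add_divide_distrib by (simp add: algebra_simps)
  qed
  show ?thesis using DERIV_cdivide[OF d, of "fact (Suc k)"] unfolding eq .
qed

lemma gg_deriv: "((gg l (Suc k)) has_real_derivative (l * (gg l k t - gg l (Suc k) t))) (at t)"
proof (induction k)
  case 0
  show ?case unfolding gg_def
    by (auto intro!: derivative_eq_intros)
next
  case (Suc k)
  have e: "gg l (Suc (Suc k)) = (\<lambda>t. gg l (Suc k) t + exp (-(l*t)) * (l*t)^(Suc k) / fact (Suc k))"
    by (simp add: gg_Suc fun_eq_iff)
  have "((\<lambda>t. exp (-(l*t)) * (l*t)^(Suc k) / fact (Suc k)) has_real_derivative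
      (l * (exp (-(l*t)) * (l*t)^k / fact k - exp (-(l*t)) * (l*t)^(Suc k) / fact (Suc k)))) (at t)"
    by (rule term_deriv)
  from DERIV_add[OF Suc this] show ?case unfolding e by (simp add: gg_Suc algebra_simps)
qed

lemma GG_deriv: "l \<noteq> 0 \<Longrightarrow> ((GG l k) has_real_derivative (gg l k t)) (at t)"
proof (induction k)
  case 0
  then show ?case by (simp add: GG_def fun_eq_iff)
next
  case (Suc k)
  have e: "GG l (Suc k) = (\<lambda>t. GG l k t + (1 - gg l (Suc k) t) / l)"
    by (simp add: GG_def fun_eq_iff)
  show ?case unfolding e
    apply (rule derivative_eq_intros Suc gg_deriv refl)+
    using Suc by (simp add: field_simps)
qed

lemma GG_le: "0 < l \<Longrightarrow> 0 \<le> t \<Longrightarrow> GG l k t \<le> real k / l"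
proof -
  assume l: "0 < l" and t: "0 \<le> t"
  have "GG l k t \<le> (\<Sum>j<k. 1 / l)" unfolding GG_def
    by (intro sum_mono divide_right_mono) (use gg_nonneg[OF _ t] l in auto)
  then show ?thesis by simp
qed

lemma gg_tendsto: "0 < l \<Longrightarrow> ((gg l k) \<longlongrightarrow> 0) at_top"
proof -
  assume l: "0 < l"
  have lim: "filterlim (\<lambda>t. l * t) at_top at_top"
    using l by (intro filterlim_tendsto_pos_mult_at_top[OF tendsto_const]) (auto simp: filterlim_ident)
  have "((\<lambda>t. (\<Sum>m<k. ((l*t)^m / exp (l*t)) / fact m)) \<longlongrightarrow> (\<Sum>m<k. 0 / fact m)) at_top"
    apply (intro tendsto_sum tendsto_divide tendsto_const)
    using filterlim_compose[OF tendsto_power_div_exp_0 lim] by auto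
  then show ?thesis unfolding gg_def by (simp add: exp_minus field_simps)
qed



lemma gg_cont: "continuous_on S (gg l k)"
  unfolding gg_def by (intro continuous_intros) auto

lemma scalar_cmp:
  fixes y :: "nat \<Rightarrow> real \<Rightarrow> real" and q :: "nat \<Rightarrow> nat \<Rightarrow> real \<Rightarrow> real" and h :: "nat \<Rightarrow> nat"
  assumes T: "0 \<le> T" and l: "0 < l"
    and cont: "\<And>i. i \<in> {1..N} \<Longrightarrow> continuous_on {0..T} (y i)"
    and der: "\<And>i s. i \<in> {1..N} \<Longrightarrow> 0 < s \<Longrightarrow> s < T \<Longrightarrow>
         (y i has_real_derivative (\<Sum>j\<in>{1..N}-{i}. q i j s * (y j s - y i s))) (at s)"
    and qnn: "\<And>i j s. i \<in> {1..N} \<Longrightarrow> j \<in> {1..N} \<Longrightarrow> 0 < s \<Longrightarrow> s < T \<Longrightarrow> 0 \<le> q i j s"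
    and qh: "\<And>i j s. i \<in> {1..N} \<Longrightarrow> j \<in> {1..N} \<Longrightarrow> 0 < s \<Longrightarrow> s < T \<Longrightarrow> q i j s \<noteq> 0 \<Longrightarrow> j < i \<and> h j < h i"
    and rate: "\<And>i s. i \<in> {2..N} \<Longrightarrow> 0 < s \<Longrightarrow> s < T \<Longrightarrow> l \<le> (\<Sum>j\<in>{1..N}-{i}. q i j s)"
    and hpos: "\<And>i. i \<in> {2..N} \<Longrightarrow> 1 \<le> h i"
    and y1: "\<And>s. y 1 s = 0"
    and sig: "0 \<le> \<sigma>" and y0: "\<And>i. i \<in> {1..N} \<Longrightarrow> y i 0 \<le> \<sigma>"
  shows "i \<in> {1..N} \<Longrightarrow> t \<in> {0..T} \<Longrightarrow> y i t \<le> \<sigma> * gg l (h i) t"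
proof (induction i arbitrary: t rule: less_induct)
  case (less i)
  show ?case
  proof (cases "i = 1")
    case True
    then show ?thesis using y1 sig gg_nonneg[of l t "h 1"] l less.prems by simp
  next
    case False
    then have i2: "i \<in> {2..N}" using less.prems by auto
    obtain k where k: "h i = Suc k" using hpos[OF i2] by (cases "h i") auto
    have t: "0 \<le> t" "t \<le> T" using less.prems by auto
    define D where "D s = y i s - \<sigma> * gg l (h i) s" for s
    define D' where "D' s = (\<Sum>j\<in>{1..N}-{i}. q i j s * (y j s - y i s)) - \<sigma> * (l * (gg l k s - gg l (Suc k) s))" for s
    have "D t \<le> 0"
    proof (rule barrier[of t D D'])
      show "0 \<le> t" by (rule t)
      show "continuous_on {0..t} D" unfolding D_def
        using t by (intro continuous_intros gg_cont continuous_on_subset[OF cont[OF less.prems(1)]]) auto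
      show "D 0 \<le> 0" unfolding D_def using y0[OF less.prems(1)] gg_at0[of "h i" l] k by simp
      show "(D has_real_derivative D' s) (at s)" if "0 < s" "s < t" for s
        unfolding D_def D'_def k
        using t that by (intro DERIV_diff der[OF less.prems(1)] DERIV_cmult gg_deriv) auto
      show "D' s \<le> 0" if s: "0 < s" "s < t" and Dp: "D s > 0" for s
      proof -
        have yi: "y i s > \<sigma> * gg l (Suc k) s" using Dp unfolding D_def k by simp
        have gmono: "gg l k s \<le> gg l (Suc k) s" using l s by (intro gg_mono) auto
        have b: "\<sigma> * gg l k s - y i s \<le> 0"
          using yi mult_left_mono[OF gmono sig] by linarith
        have trm: "q i j s * (y j s - y i s) \<le> q i j s * (\<sigma> * gg l k s - y i s)"
          if j: "j \<in> {1..N}-{i}" for j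
        proof (cases "q i j s = 0")
          case True then show ?thesis by simp
        next
          case False
          then have jh: "j < i" "h j < h i" using qh[of i j s] less.prems j s t by auto
          have "y j s \<le> \<sigma> * gg l (h j) s" using less.IH[OF jh(1)] j s t by auto
          also have "\<dots> \<le> \<sigma> * gg l k s"
            using jh k l s sig by (intro mult_left_mono gg_mono) auto
          finally show ?thesis using qnn[of i j s] less.prems j s t by (intro mult_left_mono) auto
        qed
        have "(\<Sum>j\<in>{1..N}-{i}. q i j s * (y j s - y i s)) \<le> (\<Sum>j\<in>{1..N}-{i}. q i j s * (\<sigma> * gg l k s - y i s))"
          by (rule sum_mono) (rule trm)
        also have "\<dots> = (\<Sum>j\<in>{1..N}-{i}. q i j s) * (\<sigma> * gg l k s - y i s)"
          by (simp add: sum_distrib_right)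
        also have "\<dots> \<le> l * (\<sigma> * gg l k s - y i s)"
          using rate[OF i2, of s] s t b by (intro mult_right_mono_neg) auto
        also have "\<dots> \<le> \<sigma> * (l * (gg l k s - gg l (Suc k) s))"
          using yi l by (simp add: algebra_simps)
        finally show ?thesis unfolding D'_def by simp
      qed
    qed
    then show ?thesis unfolding D_def by simp
  qed
qed



lemma diam_eq: "diam N x t = Max ((\<lambda>(i,j). norm (x i t - x j t)) ` ({1..N} \<times> {1..N}))"
  unfolding diam_def apply (rule arg_cong[where f=Max]) apply (auto simp: image_iff) apply blast done

lemma diam_ge: "i \<in> {1..N} \<Longrightarrow> j \<in> {1..N} \<Longrightarrow> norm (x i t - x j t) \<le> diam N x t"
  unfolding diam_eq by (rule Max_ge) auto

lemma diam_le: "1 \<le> N \<Longrightarrow> (\<And>i j. i \<in> {1..N} \<Longrightarrow> j \<in> {1..N} \<Longrightarrow> norm (x i t - x j t) \<le> c) \<Longrightarrow> diam N x t \<le> c"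
  unfolding diam_eq by (subst Max_le_iff) auto

lemma diam_nonneg: "1 \<le> N \<Longrightarrow> 0 \<le> diam N x t"
  using diam_ge[of 1 N 1 x t] by simp

lemma diam_attained: "1 \<le> N \<Longrightarrow> \<exists>i\<in>{1..N}. \<exists>j\<in>{1..N}. diam N x t = norm (x i t - x j t)"
proof -
  assume N: "1 \<le> N"
  have "diam N x t \<in> ((\<lambda>(i,j). norm (x i t - x j t)) ` ({1..N} \<times> {1..N}))"
    unfolding diam_eq using N by (intro Max_in) auto
  then show ?thesis by auto
qed

lemma vd_cont:
  assumes "\<And>t. 0 \<le> t \<Longrightarrow> (f has_vector_derivative f' t) (at t within {0..})"
  shows "continuous_on {0..T} f"
proof -
  have "continuous_on {0..} f" unfolding continuous_on_eq_continuous_within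
  proof
    fix t :: real assume "t \<in> {0..}"
    then show "continuous (at t within {0..}) f" by (intro has_vector_derivative_continuous[OF assms]) auto
  qed
  then show ?thesis by (rule continuous_on_subset) auto
qed

lemma vd_at:
  assumes "(f has_vector_derivative f') (at t within {0..})" "0 < (t::real)"
  shows "(f has_vector_derivative f') (at t)"
proof -
  have "(f has_vector_derivative f') (at t within {0<..})"
    using assms(1) by (rule has_vector_derivative_within_subset) auto
  then show ?thesis using has_vector_derivative_within_open[of t "{0<..}"] assms(2) by auto
qed

lemma GG_cont: "l \<noteq> 0 \<Longrightarrow> continuous_on S (GG l k)"
  unfolding GG_def gg_def by (intro continuous_intros) auto

lemma GG_at0: "GG l k 0 = 0"
  unfolding GG_def using gg_at0[of "Suc _" l] by simp

locale flock_setup =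
  fixes N :: nat and x v :: "nat \<Rightarrow> real \<Rightarrow> 'a::euclidean_space" and q :: "nat \<Rightarrow> nat \<Rightarrow> real \<Rightarrow> real"
    and h :: "nat \<Rightarrow> nat" and H :: nat and l r :: real
  assumes N: "1 \<le> N" and l: "0 < l" and H: "1 \<le> H"
    and dx: "\<And>i t. i\<in>{1..N} \<Longrightarrow> 0 \<le> t \<Longrightarrow> (x i has_vector_derivative v i t) (at t within {0..})"
    and dv: "\<And>i t. i\<in>{1..N} \<Longrightarrow> 0 \<le> t \<Longrightarrow>
       (v i has_vector_derivative (\<Sum>j\<in>{1..N}-{i}. q i j t *\<^sub>R (v j t - v i t))) (at t within {0..})"
    and qnn: "\<And>i j t. i\<in>{1..N} \<Longrightarrow> j\<in>{1..N} \<Longrightarrow> 0 \<le> t \<Longrightarrow> 0 \<le> q i j t"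
    and qh: "\<And>i j t. i\<in>{1..N} \<Longrightarrow> j\<in>{1..N} \<Longrightarrow> 0 \<le> t \<Longrightarrow> q i j t \<noteq> 0 \<Longrightarrow> j < i \<and> h j < h i"
    and hb: "\<And>i. i \<in> {2..N} \<Longrightarrow> 1 \<le> h i" and hH: "\<And>i. i \<in> {1..N} \<Longrightarrow> h i \<le> H"
    and rate: "\<And>i t. i\<in>{2..N} \<Longrightarrow> 0 \<le> t \<Longrightarrow> diam N x t \<le> r \<Longrightarrow> l \<le> (\<Sum>j\<in>{1..N}-{i}. q i j t)"
    and cond: "diam N v 0 * real H < l * (r - diam N x 0)"
begin

abbreviation "V0 \<equiv> diam N v 0"
abbreviation "X0 \<equiv> diam N x 0"

lemma V0_nonneg: "0 \<le> V0" using diam_nonneg[OF N] .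

lemma q1: "j \<in> {1..N} \<Longrightarrow> 0 \<le> t \<Longrightarrow> q 1 j t = 0"
  using qh[of 1 j t] N by auto

lemma vel_bound:
  assumes T: "0 \<le> T" and HX: "\<And>s. 0 \<le> s \<Longrightarrow> s < T \<Longrightarrow> diam N x s \<le> r"
    and t: "t \<in> {0..T}" and i: "i \<in> {1..N}" and j: "j \<in> {1..N}"
  shows "norm (v i t - v j t) \<le> V0 * gg l H t"
proof -
  define y where "y e k s = inner e (v k s - v 1 s)" for e k s
  define \<sigma> where "\<sigma> e = Max ((\<lambda>k. y e k 0) ` {1..N})" for e
  have N1: "1 \<in> {1..N}" using N by simp
  have vc: "continuous_on {0..T} (v k)" if "k \<in> {1..N}" for k
    by (rule vd_cont, rule dv) (use that in auto)
  have sig0: "0 \<le> \<sigma> e" for e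
  proof -
    have "y e 1 0 \<le> \<sigma> e" unfolding \<sigma>_def using N1 by (intro Max_ge) auto
    then show ?thesis unfolding y_def by simp
  qed
  have sigin: "\<exists>k\<in>{1..N}. \<sigma> e = y e k 0" for e
  proof -
    have "\<sigma> e \<in> (\<lambda>k. y e k 0) ` {1..N}" unfolding \<sigma>_def using N1 by (intro Max_in) auto
    then show ?thesis by auto
  qed
  have cmp: "y e k t \<le> \<sigma> e * gg l (h k) t" if k: "k \<in> {1..N}" for e k
  proof (rule scalar_cmp[where q=q and h=h and N=N and T=T and y="y e" and l=l, OF T l _ _ _ _ _ hb _ sig0 _ k t])
    show "continuous_on {0..T} (y e k)" if "k \<in> {1..N}" for k
      unfolding y_def using that N1
      by (intro continuous_intros vc) auto
    show "(y e k has_real_derivative (\<Sum>j\<in>{1..N}-{k}. q k j s * (y e j s - y e k s))) (at s)"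
      if k: "k \<in> {1..N}" and s: "0 < s" "s < T" for k s
    proof -
      have d: "((\<lambda>s. v k s - v 1 s) has_vector_derivative
         ((\<Sum>j\<in>{1..N}-{k}. q k j s *\<^sub>R (v j s - v k s)) - (\<Sum>j\<in>{1..N}-{1}. q 1 j s *\<^sub>R (v j s - v 1 s)))) (at s)"
        using k s N1 by (intro has_vector_derivative_diff vd_at[OF dv]) auto
      have z: "(\<Sum>j\<in>{1..N}-{1}. q 1 j s *\<^sub>R (v j s - v 1 s)) = 0"
        using q1 s by (intro sum.neutral) auto
      have "(y e k has_vector_derivative inner e (\<Sum>j\<in>{1..N}-{k}. q k j s *\<^sub>R (v j s - v k s))) (at s)"
        unfolding y_def using bounded_linear.has_vector_derivative[OF bounded_linear_inner_right d] z by simp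
      moreover have "inner e (\<Sum>j\<in>{1..N}-{k}. q k j s *\<^sub>R (v j s - v k s)) = (\<Sum>j\<in>{1..N}-{k}. q k j s * (y e j s - y e k s))"
        unfolding y_def by (simp add: inner_sum_right inner_diff_right)
      ultimately show ?thesis by (simp add: has_real_derivative_iff_has_vector_derivative)
    qed
    show "0 \<le> q i j s" if "i \<in> {1..N}" "j \<in> {1..N}" "0 < s" "s < T" for i j s
      using qnn[of i j s] that by auto
    show "j < i \<and> h j < h i" if "i \<in> {1..N}" "j \<in> {1..N}" "0 < s" "s < T" "q i j s \<noteq> 0" for i j s
      using qh[of i j s] that by auto
    show "l \<le> (\<Sum>j\<in>{1..N}-{i}. q i j s)" if "i \<in> {2..N}" "0 < s" "s < T" for i s
      using rate HX that by auto
    show "y e 1 s = 0" for s unfolding y_def by simp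
    show "y e k 0 \<le> \<sigma> e" if "k \<in> {1..N}" for k
      unfolding \<sigma>_def using that by (intro Max_ge) auto
  qed
  define e where "e = v i t - v j t"
  have t0: "0 \<le> t" using t by simp
  have g1: "y e i t \<le> \<sigma> e * gg l H t"
    using cmp[OF i, of e] mult_left_mono[OF gg_mono[OF less_imp_le[OF l] t0 hH[OF i]] sig0[of e]] by linarith
  have g2: "y (-e) j t \<le> \<sigma> (-e) * gg l H t"
    using cmp[OF j, of "-e"] mult_left_mono[OF gg_mono[OF less_imp_le[OF l] t0 hH[OF j]] sig0[of "-e"]] by linarith
  have sum: "y e i t + y (-e) j t = norm e ^ 2"
    unfolding y_def e_def by (simp add: inner_diff_right inner_diff_left power2_norm_eq_inner algebra_simps)
  obtain a b where a: "a \<in> {1..N}" "\<sigma> e = y e a 0" and b: "b \<in> {1..N}" "\<sigma> (-e) = y (-e) b 0"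
    using sigin by metis
  have "\<sigma> e + \<sigma> (-e) = inner e (v a 0 - v b 0)"
    unfolding a b y_def by (simp add: inner_diff_right)
  also have "\<dots> \<le> norm e * norm (v a 0 - v b 0)" by (rule norm_cauchy_schwarz)
  also have "\<dots> \<le> norm e * V0" using diam_ge[OF a(1) b(1)] by (intro mult_left_mono) auto
  finally have ss: "\<sigma> e + \<sigma> (-e) \<le> norm e * V0" .
  have gnn: "0 \<le> gg l H t" using gg_nonneg l t0 by simp
  have "norm e ^ 2 \<le> (\<sigma> e + \<sigma> (-e)) * gg l H t" using g1 g2 sum by (simp add: algebra_simps)
  also have "\<dots> \<le> norm e * V0 * gg l H t" using ss gnn by (rule mult_right_mono)
  finally have "norm e * norm e \<le> norm e * (V0 * gg l H t)" by (simp add: power2_eq_square algebra_simps)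
  then have "norm e \<le> V0 * gg l H t"
    using V0_nonneg gnn by (cases "norm e = 0") (auto simp: mult_le_cancel_left)
  then show ?thesis unfolding e_def .
qed


lemma xc: "k \<in> {1..N} \<Longrightarrow> continuous_on {0..T} (x k)"
  by (rule vd_cont, rule dx) auto

lemma pos_bound:
  assumes T: "0 \<le> T" and HX: "\<And>s. 0 \<le> s \<Longrightarrow> s < T \<Longrightarrow> diam N x s \<le> r"
    and i: "i \<in> {1..N}" and j: "j \<in> {1..N}"
  shows "norm (x i T - x j T) \<le> X0 + V0 * real H / l"
proof -
  define d where "d s = x i s - x j s" for s
  define e where "e = d T - d 0"
  define D where "D s = inner e (d s - d 0) - norm e * V0 * GG l H s" for s
  define D' where "D' s = inner e (v i s - v j s) - norm e * V0 * gg l H s" for s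
  have "D T \<le> 0"
  proof (rule barrier[of T D D'])
    show "0 \<le> T" by (rule T)
    show "continuous_on {0..T} D" unfolding D_def d_def
      using l i j by (intro continuous_intros xc GG_cont) auto
    show "D 0 \<le> 0" unfolding D_def by (simp add: GG_at0)
    show "(D has_real_derivative D' s) (at s)" if s: "0 < s" "s < T" for s
    proof -
      have "((\<lambda>s. d s - d 0) has_vector_derivative (v i s - v j s - 0)) (at s)"
        unfolding d_def using s i j by (intro has_vector_derivative_diff vd_at[OF dx] has_vector_derivative_const) auto
      then have "((\<lambda>s. inner e (d s - d 0)) has_vector_derivative inner e (v i s - v j s)) (at s)"
        using bounded_linear.has_vector_derivative[OF bounded_linear_inner_right] by fastforce
      then have d1: "((\<lambda>s. inner e (d s - d 0)) has_real_derivative inner e (v i s - v j s)) (at s)"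
        by (simp add: has_real_derivative_iff_has_vector_derivative)
      show ?thesis unfolding D_def D'_def
        using l by (intro DERIV_diff d1 DERIV_cmult GG_deriv) auto
    qed
    show "D' s \<le> 0" if s: "0 < s" "s < T" for s
    proof -
      have "inner e (v i s - v j s) \<le> norm e * norm (v i s - v j s)" by (rule norm_cauchy_schwarz)
      also have "\<dots> \<le> norm e * (V0 * gg l H s)"
        using vel_bound[OF T HX _ i j, of s] s by (intro mult_left_mono) auto
      finally show ?thesis unfolding D'_def by (simp add: algebra_simps)
    qed
  qed
  then have "norm e * norm e \<le> norm e * (V0 * GG l H T)"
    unfolding D_def e_def by (simp add: algebra_simps flip: power2_eq_square power2_norm_eq_inner)
  then have ne2: "norm e \<le> V0 * real H / l"
  proof (cases "norm e = 0")
    case True then show ?thesis using V0_nonneg l by simp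
  next
    case False
    assume a: "norm e * norm e \<le> norm e * (V0 * GG l H T)"
    then have "norm e \<le> V0 * GG l H T" using False by (simp add: mult_le_cancel_left)
    also have "\<dots> \<le> V0 * (real H / l)" using GG_le[OF l T] V0_nonneg by (intro mult_left_mono) auto
    finally show ?thesis by simp
  qed
  have "d T = d 0 + e" unfolding e_def by simp
  then have "norm (d T) \<le> norm (d 0) + norm e" by (metis norm_triangle_ineq)
  moreover have "norm (d 0) \<le> X0" unfolding d_def using diam_ge[OF i j] .
  ultimately show ?thesis using ne2 unfolding d_def by simp
qed

lemma R_lt: "X0 + V0 * real H / l < r"
proof -
  have "V0 * real H / l < r - X0" using cond l by (simp add: divide_less_eq mult.commute)
  then show ?thesis by simp
qed

lemma X_le: assumes t2: "0 \<le> t2" shows "diam N x t2 \<le> r"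
proof (rule ccontr)
  assume nt: "\<not> diam N x t2 \<le> r"
  define Z where "Z = (\<Union>p\<in>{1..N}\<times>{1..N}. {0..t2} \<inter> (\<lambda>s. norm (x (fst p) s - x (snd p) s)) -` {r..})"
  have cZ: "closed Z" unfolding Z_def
  proof (intro closed_UN ballI)
    show "finite ({1..N}\<times>{1..N})" by simp
    fix p assume "p \<in> {1..N}\<times>{1..N}"
    then show "closed ({0..t2} \<inter> (\<lambda>s. norm (x (fst p) s - x (snd p) s)) -` {r..})"
      by (intro continuous_closed_preimage continuous_intros xc) auto
  qed
  obtain a b where ab: "a \<in> {1..N}" "b \<in> {1..N}" "diam N x t2 = norm (x a t2 - x b t2)"
    using diam_attained[OF N] by blast
  have t2Z: "t2 \<in> Z" unfolding Z_def using ab nt t2 by force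
  have bZ: "bdd_below Z" unfolding Z_def by (intro bdd_belowI[where m=0]) auto
  define T0 where "T0 = Inf Z"
  have T0Z: "T0 \<in> Z" unfolding T0_def using closed_contains_Inf[OF _ bZ cZ] t2Z by blast
  have T0: "0 \<le> T0" "T0 \<le> t2" using T0Z unfolding Z_def by auto
  have HX: "diam N x s \<le> r" if s: "0 \<le> s" "s < T0" for s
  proof (rule diam_le[OF N])
    fix i j assume ij: "i \<in> {1..N}" "j \<in> {1..N}"
    show "norm (x i s - x j s) \<le> r"
    proof (rule ccontr)
      assume "\<not> norm (x i s - x j s) \<le> r"
      then have "s \<in> Z" unfolding Z_def using ij s T0 by force
      then have "T0 \<le> s" unfolding T0_def using bZ by (rule cInf_lower)
      then show False using s by simp
    qed
  qed
  obtain p where p: "p \<in> {1..N}\<times>{1..N}" "r \<le> norm (x (fst p) T0 - x (snd p) T0)"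
    using T0Z unfolding Z_def by auto
  have "norm (x (fst p) T0 - x (snd p) T0) \<le> X0 + V0 * real H / l"
    using p(1) by (intro pos_bound[OF T0(1) HX]) auto
  then show False using p(2) R_lt by simp
qed

theorem flock: "flocking N x v"
  unfolding flocking_def
proof
  show "\<exists>B. \<forall>t\<ge>0. diam N x t \<le> B" using X_le by blast
  have le: "diam N v t \<le> V0 * gg l H t" if t: "0 \<le> t" for t
    by (rule diam_le[OF N], rule vel_bound[OF t]) (use X_le t in auto)
  show "((\<lambda>t. diam N v t) \<longlongrightarrow> 0) at_top"
  proof (rule tendsto_sandwich[of "\<lambda>_. 0" _ _ "\<lambda>t. V0 * gg l H t"])
    show "\<forall>\<^sub>F t in at_top. 0 \<le> diam N v t" by (intro always_eventually allI diam_nonneg[OF N])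
    show "\<forall>\<^sub>F t in at_top. diam N v t \<le> V0 * gg l H t"
      using eventually_ge_at_top[of 0] by eventually_elim (rule le)
    show "((\<lambda>_. 0) \<longlongrightarrow> (0::real)) at_top" by simp
    show "((\<lambda>t. V0 * gg l H t) \<longlongrightarrow> 0) at_top"
      using tendsto_mult_right_zero[OF gg_tendsto[OF l]] by simp
  qed
qed

end



locale hier =
  fixes N :: nat and A :: "nat \<Rightarrow> nat \<Rightarrow> real"
  assumes N2: "N \<ge> 2"
    and A_nonneg: "\<forall>i\<in>{1..N}. \<forall>j\<in>{1..N}. A i j \<ge> 0"
    and A_lower: "\<forall>i\<in>{1..N}. \<forall>j\<in>{1..N}. A i j > 0 \<longrightarrow> j < i"
    and A_leader: "\<forall>i\<in>{2..N}. \<exists>j\<in>{1..<i}. A i j > 0"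
begin

lemma edge_lt: "edge N A i j \<Longrightarrow> j < i"
  using A_lower unfolding edge_def by auto

lemma path_bound: assumes "path_to_1 N A i k" shows "k < i"
proof -
  obtain p where p: "p 0 = i" "p k = 1" "\<forall>m<k. edge N A (p m) (p (Suc m))"
    using assms unfolding path_to_1_def by blast
  have "m \<le> k \<Longrightarrow> p m + m \<le> p 0" for m
  proof (induction m)
    case 0 then show ?case by simp
  next
    case (Suc m)
    then have "p (Suc m) < p m" using p(3) edge_lt by auto
    then show ?case using Suc by simp
  qed
  from this[of k] p show ?thesis by simp
qed

lemma path_exists: "i \<in> {1..N} \<Longrightarrow> \<exists>k. path_to_1 N A i k"
proof (induction i rule: less_induct)
  case (less i)
  show ?case
  proof (cases "i = 1")
    case True
    then show ?thesis unfolding path_to_1_def by (intro exI[of _ 0] exI[of _ "\<lambda>_. 1"]) auto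
  next
    case False
    then have i2: "i \<in> {2..N}" using less.prems by auto
    then obtain j where j: "j \<in> {1..<i}" "A i j > 0" using A_leader by blast
    then obtain k where "path_to_1 N A j k" using less.IH[of j] less.prems by auto
    then obtain p where p: "p 0 = j" "p k = 1" "\<forall>m<k. edge N A (p m) (p (Suc m))"
      unfolding path_to_1_def by blast
    define p' where "p' m = (if m = 0 then i else p (m - 1))" for m
    have "path_to_1 N A i (Suc k)" unfolding path_to_1_def
    proof (intro exI[of _ p'] conjI allI impI)
      show "p' 0 = i" "p' (Suc k) = 1" unfolding p'_def using p by auto
      fix m assume m: "m < Suc k"
      show "edge N A (p' m) (p' (Suc m))"
      proof (cases m)
        case 0 then show ?thesis unfolding p'_def edge_def using j i2 p less.prems by auto
      next
        case (Suc m') then show ?thesis unfolding p'_def using p m by auto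
      qed
    qed
    then show ?thesis by blast
  qed
qed

lemma hh_fin: "finite {k. path_to_1 N A i k}"
  by (rule finite_subset[of _ "{..<i}"]) (auto dest: path_bound)

lemma hh_path: "i \<in> {1..N} \<Longrightarrow> path_to_1 N A i (hh N A i)"
  unfolding hh_def using Max_in[OF hh_fin] path_exists by auto

lemma hh_ge: "path_to_1 N A i k \<Longrightarrow> k \<le> hh N A i"
  unfolding hh_def using Max_ge[OF hh_fin] by auto

lemma hh_edge: assumes "i \<in> {1..N}" "j \<in> {1..N}" "A i j > 0" "i \<noteq> j"
  shows "hh N A j < hh N A i"
proof -
  obtain p where p: "p 0 = j" "p (hh N A j) = 1" "\<forall>m<hh N A j. edge N A (p m) (p (Suc m))"
    using hh_path[OF assms(2)] unfolding path_to_1_def by blast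
  define p' where "p' m = (if m = 0 then i else p (m - 1))" for m
  have "path_to_1 N A i (Suc (hh N A j))" unfolding path_to_1_def
  proof (intro exI[of _ p'] conjI allI impI)
    show "p' 0 = i" "p' (Suc (hh N A j)) = 1" unfolding p'_def using p by auto
    fix m assume m: "m < Suc (hh N A j)"
    show "edge N A (p' m) (p' (Suc m))"
    proof (cases m)
      case 0 then show ?thesis unfolding p'_def edge_def using assms p by auto
    next
      case (Suc m') then show ?thesis unfolding p'_def using p m by auto
    qed
  qed
  then show ?thesis using hh_ge by fastforce
qed

lemma A1: "j \<in> {1..N} \<Longrightarrow> A 1 j = 0"
  using A_nonneg A_lower N2 by (metis atLeastAtMost_iff le_antisym linorder_not_less not_one_le_zero order.order_iff_strict less_one nat_le_linear one_le_numeral order_trans)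

lemma hh1: "hh N A 1 = 0"
  using hh_path[of 1] path_bound N2 by fastforce

lemma hh_pos: "i \<in> {2..N} \<Longrightarrow> 1 \<le> hh N A i"
proof -
  assume i: "i \<in> {2..N}"
  then obtain j where j: "j \<in> {1..<i}" "A i j > 0" using A_leader by blast
  then have "hh N A j < hh N A i" using i by (intro hh_edge) auto
  then show ?thesis by simp
qed

lemma hh_HH: "i \<in> {1..N} \<Longrightarrow> hh N A i \<le> HH N A"
proof -
  assume i: "i \<in> {1..N}"
  show ?thesis
  proof (cases "i = 1")
    case True then show ?thesis using hh1 by simp
  next
    case False
    then show ?thesis unfolding HH_def using i by (intro Max_ge) auto
  qed
qed

lemma HH_pos: "1 \<le> HH N A"
  using hh_pos[of 2] hh_HH[of 2] N2 by force

definition Ai where "Ai i = (\<Sum>j\<in>{1..N}-{i}. A i j)"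

lemma Ai_pos: "i \<in> {2..N} \<Longrightarrow> 0 < Ai i"
proof -
  assume i: "i \<in> {2..N}"
  then obtain j where j: "j \<in> {1..<i}" "A i j > 0" using A_leader by blast
  show ?thesis unfolding Ai_def
    using j i A_nonneg by (intro sum_pos2[of _ j]) auto
qed

lemma Astar_le: "i \<in> {2..N} \<Longrightarrow> Astar N A \<le> Ai i"
  unfolding Astar_def Ai_def by (intro Min_le) auto

lemma Astar_pos: "0 < Astar N A"
proof -
  have "Astar N A \<in> (\<lambda>i. \<Sum>j\<in>{1..N}-{i}. A i j) ` {2..N}"
    unfolding Astar_def using N2 by (intro Min_in) auto
  then show ?thesis using Ai_pos unfolding Ai_def by auto
qed

end

lemma psi_pos: "0 < psi b r"
proof -
  have "0 < 1 + r\<^sup>2" by (simp add: add_pos_nonneg)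
  then show ?thesis unfolding psi_def by simp
qed

lemma psi_anti: "0 \<le> b \<Longrightarrow> 0 \<le> u \<Longrightarrow> u \<le> w \<Longrightarrow> psi b w \<le> psi b u"
  unfolding psi_def by (intro powr_mono2') (auto intro: power_mono add_pos_nonneg)

lemma psi_le1: "0 \<le> b \<Longrightarrow> psi b r \<le> 1"
  using powr_mono2'[of "-b/2" 1 "1 + r\<^sup>2"] unfolding psi_def by simp



context hier begin

lemma CS_flock:
  fixes x v :: "nat \<Rightarrow> real \<Rightarrow> 'a::euclidean_space"
  assumes alpha: "\<alpha> > 0" and beta: "\<beta> \<ge> 0" and sol: "CS_solution N \<alpha> A \<beta> x v"
    and c: "diam N v 0 * real (HH N A) < \<alpha> * Astar N A * psi \<beta> r * (r - diam N x 0)"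
  shows "flocking N x v"
proof -
  interpret flock_setup N x v "\<lambda>i j t. \<alpha> * (A i j * psi \<beta> (norm (x j t - x i t)))" "hh N A" "HH N A"
    "\<alpha> * Astar N A * psi \<beta> r" r
  proof (unfold_locales)
    show "1 \<le> N" using N2 by simp
    show "0 < \<alpha> * Astar N A * psi \<beta> r" using alpha Astar_pos psi_pos by simp
    show "1 \<le> HH N A" by (rule HH_pos)
    show "(x i has_vector_derivative v i t) (at t within {0..})" if "i \<in> {1..N}" "0 \<le> t" for i t
      using sol that unfolding CS_solution_def by auto
    show "(v i has_vector_derivative (\<Sum>j\<in>{1..N}-{i}. (\<alpha> * (A i j * psi \<beta> (norm (x j t - x i t)))) *\<^sub>R (v j t - v i t))) (at t within {0..})"
      if "i \<in> {1..N}" "0 \<le> t" for i t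
      using sol that unfolding CS_solution_def by (auto simp: scaleR_sum_right)
    show "0 \<le> \<alpha> * (A i j * psi \<beta> (norm (x j t - x i t)))" if "i \<in> {1..N}" "j \<in> {1..N}" for i j t
      using that alpha A_nonneg psi_pos[of \<beta>] by (intro mult_nonneg_nonneg) (auto simp: less_imp_le)
    show "j < i \<and> hh N A j < hh N A i"
      if "i \<in> {1..N}" "j \<in> {1..N}" "\<alpha> * (A i j * psi \<beta> (norm (x j t - x i t))) \<noteq> 0" for i j t
    proof -
      have "A i j > 0" using that A_nonneg by force
      then show ?thesis using that A_lower hh_edge by force
    qed
    show "1 \<le> hh N A i" if "i \<in> {2..N}" for i using hh_pos that .
    show "hh N A i \<le> HH N A" if "i \<in> {1..N}" for i using hh_HH that .
    show "\<alpha> * Astar N A * psi \<beta> r \<le> (\<Sum>j\<in>{1..N}-{i}. \<alpha> * (A i j * psi \<beta> (norm (x j t - x i t))))"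
      if i: "i \<in> {2..N}" and t: "0 \<le> t" and X: "diam N x t \<le> r" for i t
    proof -
      have "\<alpha> * Astar N A * psi \<beta> r \<le> \<alpha> * Ai i * psi \<beta> r"
        using Astar_le[OF i] alpha psi_pos[of \<beta> r] by (intro mult_right_mono mult_left_mono) auto
      also have "\<dots> = (\<Sum>j\<in>{1..N}-{i}. \<alpha> * (A i j * psi \<beta> r))"
        unfolding Ai_def by (simp add: sum_distrib_left sum_distrib_right algebra_simps)
      also have "\<dots> \<le> (\<Sum>j\<in>{1..N}-{i}. \<alpha> * (A i j * psi \<beta> (norm (x j t - x i t))))"
      proof (rule sum_mono)
        fix j assume j: "j \<in> {1..N}-{i}"
        have "norm (x j t - x i t) \<le> r" using diam_ge[of j N i x t] j i X by auto
        then have "psi \<beta> r \<le> psi \<beta> (norm (x j t - x i t))" using beta by (intro psi_anti) auto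
        then show "\<alpha> * (A i j * psi \<beta> r) \<le> \<alpha> * (A i j * psi \<beta> (norm (x j t - x i t)))"
          using alpha A_nonneg i j by (intro mult_left_mono) auto
      qed
      finally show ?thesis .
    qed
    show "diam N v 0 * real (HH N A) < \<alpha> * Astar N A * psi \<beta> r * (r - diam N x 0)" by (rule c)
  qed
  show ?thesis by (rule flock)
qed

end



lemma div_le_div_cross: fixes x y z w :: real
  assumes "0 < y" "0 < w" "x * w \<le> z * y" shows "x / y \<le> z / w"
  using assms by (simp add: field_simps)

lemma key_ineq: fixes B ab As ai Ai p s :: real
 assumes B: "0 \<le> B" "B \<le> Ai/(ai+Ai)" and As: "0 < As" "As \<le> Ai" and ai: "0 \<le> ai" "ai \<le> ab"
   and p: "0 < p" "p \<le> 1" and s: "Ai*p \<le> s"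
 shows "B*(ab+As)*p/(As*p+ab) \<le> s/(ai+s)"
proof -
  have Ai: "0 < Ai" using As by simp
  have ab: "0 \<le> ab" using ai by simp
  have d1: "0 < As*p+ab" using As p ab by (simp add: add_pos_nonneg)
  have d2: "0 < ai+Ai" using Ai ai by simp
  have d3: "0 < ai+Ai*p" using Ai ai p by (simp add: add_nonneg_pos)
  have sp: "0 < s" using s Ai p by (smt (verit) mult_pos_pos)
  have d4: "0 < ai+s" using ai sp by simp
  have "B*(ab+As)*p/(As*p+ab) \<le> (Ai/(ai+Ai))*(ab+As)*p/(As*p+ab)"
    using B As ab p d1 by (intro divide_right_mono mult_right_mono) auto
  also have "\<dots> = (Ai*(ab+As)*p) / ((ai+Ai)*(As*p+ab))" by simp
  also have "\<dots> \<le> (Ai*p) / (ai+Ai*p)"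
  proof (rule div_le_div_cross)
    show "0 < (ai+Ai)*(As*p+ab)" using d1 d2 by simp
    show "0 < ai+Ai*p" by (rule d3)
    have e: "Ai*p*((ai+Ai)*(As*p+ab)) - Ai*(ab+As)*p*(ai+Ai*p) = Ai*p*((1-p)*(Ai*ab - ai*As))"
      by (simp add: algebra_simps)
    have "As*ai \<le> Ai*ab" using As ai ab Ai by (intro mult_mono) auto
    then have "ai*As \<le> Ai*ab" by (simp add: mult.commute)
    then have "0 \<le> Ai*p*((1-p)*(Ai*ab - ai*As))" using Ai p by (intro mult_nonneg_nonneg) auto
    then show "Ai*(ab+As)*p*(ai+Ai*p) \<le> Ai*p*((ai+Ai)*(As*p+ab))" using e by linarith
  qed
  also have "\<dots> \<le> s/(ai+s)"
  proof (rule div_le_div_cross[OF d3 d4])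
    have "Ai*p*ai \<le> s*ai" using s ai by (intro mult_right_mono) auto
    then show "Ai*p*(ai+s) \<le> s*(ai+Ai*p)" by (simp add: algebra_simps)
  qed
  finally show ?thesis .
qed

context hier begin

lemma Bsum: "(\<Sum>j\<in>{1..N}-{i}. Bmat N A a i j) = Ai i / (a i + Ai i)"
  unfolding Bmat_def Ai_def by (simp add: sum_divide_distrib)

lemma Bstar_le: "i \<in> {2..N} \<Longrightarrow> Bstar N A a \<le> Ai i / (a i + Ai i)"
  unfolding Bstar_def using Bsum[of a i] by (metis (no_types, lifting) Min_le finite_atLeastAtMost finite_imageI image_eqI)

lemma Bstar_pos: assumes an: "\<forall>i\<in>{1..N}. a i \<ge> 0" shows "0 < Bstar N A a"
proof -
  have "Bstar N A a \<in> (\<lambda>i. \<Sum>j\<in>{1..N}-{i}. Bmat N A a i j) ` {2..N}"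
    unfolding Bstar_def using N2 by (intro Min_in) auto
  then obtain i where i: "i \<in> {2..N}" "Bstar N A a = Ai i / (a i + Ai i)" using Bsum by auto
  have "0 \<le> a i" using an i by auto
  then show ?thesis using i Ai_pos[OF i(1)] by simp
qed

lemma abar_ge: "i \<in> {2..N} \<Longrightarrow> a i \<le> abar N a"
  unfolding abar_def by (intro Max_ge) auto

lemma abar_nonneg: assumes "\<forall>i\<in>{1..N}. a i \<ge> 0" shows "0 \<le> abar N a"
proof -
  have "0 \<le> a 2" using assms N2 by auto
  also have "\<dots> \<le> abar N a" using N2 by (intro abar_ge) auto
  finally show ?thesis .
qed

lemma MT_flock:
  fixes x v :: "nat \<Rightarrow> real \<Rightarrow> 'a::euclidean_space"
  assumes alpha: "\<alpha> > 0" and beta: "\<beta> \<ge> 0" and an: "\<forall>i\<in>{1..N}. a i \<ge> 0"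
    and sol: "MT_solution N \<alpha> A a \<beta> x v"
    and c: "diam N v 0 * real (HH N A) < \<alpha> * (Bstar N A a * (abar N a + Astar N A) * psi \<beta> r / (Astar N A * psi \<beta> r + abar N a)) * (r - diam N x 0)"
  shows "flocking N x v"
proof -
  let ?l = "\<alpha> * (Bstar N A a * (abar N a + Astar N A) * psi \<beta> r / (Astar N A * psi \<beta> r + abar N a))"
  have ab0: "0 \<le> abar N a" by (rule abar_nonneg[OF an])
  interpret flock_setup N x v "\<lambda>i j t. \<alpha> * (A i j * psi \<beta> (norm (x i t - x j t)) / (a i + (\<Sum>k\<in>{1..N}-{i}. A i k * psi \<beta> (norm (x i t - x k t)))))"
    "hh N A" "HH N A" ?l r
  proof (unfold_locales)
    show "1 \<le> N" using N2 by simp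
    have "0 < Astar N A * psi \<beta> r + abar N a" using Astar_pos psi_pos[of \<beta> r] ab0 by (simp add: add_pos_nonneg)
    then show "0 < ?l" using alpha Astar_pos psi_pos[of \<beta> r] Bstar_pos[OF an] ab0 by (simp add: add_nonneg_pos)
    show "1 \<le> HH N A" by (rule HH_pos)
    show "(x i has_vector_derivative v i t) (at t within {0..})" if "i \<in> {1..N}" "0 \<le> t" for i t
      using sol that unfolding MT_solution_def by auto
    show "(v i has_vector_derivative (\<Sum>j\<in>{1..N}-{i}. (\<alpha> * (A i j * psi \<beta> (norm (x i t - x j t)) / (a i + (\<Sum>k\<in>{1..N}-{i}. A i k * psi \<beta> (norm (x i t - x k t)))))) *\<^sub>R (v j t - v i t))) (at t within {0..})"
      if "i \<in> {1..N}" "0 \<le> t" for i t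
      using sol that unfolding MT_solution_def by (auto simp: scaleR_sum_right)
    show "0 \<le> \<alpha> * (A i j * psi \<beta> (norm (x i t - x j t)) / (a i + (\<Sum>k\<in>{1..N}-{i}. A i k * psi \<beta> (norm (x i t - x k t)))))"
      if "i \<in> {1..N}" "j \<in> {1..N}" for i j t
    proof -
      have "0 \<le> (\<Sum>k\<in>{1..N}-{i}. A i k * psi \<beta> (norm (x i t - x k t)))"
        using that A_nonneg psi_pos[of \<beta>] by (intro sum_nonneg mult_nonneg_nonneg) (auto simp: less_imp_le)
      then show ?thesis
        using that alpha A_nonneg psi_pos[of \<beta>] an by (intro mult_nonneg_nonneg divide_nonneg_nonneg add_nonneg_nonneg) (auto simp: less_imp_le)
    qed
    show "j < i \<and> hh N A j < hh N A i"
      if "i \<in> {1..N}" "j \<in> {1..N}" "\<alpha> * (A i j * psi \<beta> (norm (x i t - x j t)) / (a i + (\<Sum>k\<in>{1..N}-{i}. A i k * psi \<beta> (norm (x i t - x k t))))) \<noteq> 0" for i j t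
    proof -
      have "A i j > 0" using that A_nonneg by force
      then show ?thesis using that A_lower hh_edge by force
    qed
    show "1 \<le> hh N A i" if "i \<in> {2..N}" for i using hh_pos that .
    show "hh N A i \<le> HH N A" if "i \<in> {1..N}" for i using hh_HH that .
    show "?l \<le> (\<Sum>j\<in>{1..N}-{i}. \<alpha> * (A i j * psi \<beta> (norm (x i t - x j t)) / (a i + (\<Sum>k\<in>{1..N}-{i}. A i k * psi \<beta> (norm (x i t - x k t))))))"
      if i: "i \<in> {2..N}" and t: "0 \<le> t" and X: "diam N x t \<le> r" for i t
    proof -
      define s where "s = (\<Sum>k\<in>{1..N}-{i}. A i k * psi \<beta> (norm (x i t - x k t)))"
      have sum: "(\<Sum>j\<in>{1..N}-{i}. \<alpha> * (A i j * psi \<beta> (norm (x i t - x j t)) / (a i + s))) = \<alpha> * (s / (a i + s))"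
        unfolding s_def by (simp add: sum_distrib_left sum_divide_distrib)
      have "Ai i * psi \<beta> r = (\<Sum>k\<in>{1..N}-{i}. A i k * psi \<beta> r)"
        unfolding Ai_def by (simp add: sum_distrib_right)
      also have "\<dots> \<le> s" unfolding s_def
      proof (rule sum_mono)
        fix j assume j: "j \<in> {1..N}-{i}"
        have "norm (x i t - x j t) \<le> r" using diam_ge[of i N j x t] j i X by auto
        then have "psi \<beta> r \<le> psi \<beta> (norm (x i t - x j t))" using beta by (intro psi_anti) auto
        then show "A i j * psi \<beta> r \<le> A i j * psi \<beta> (norm (x i t - x j t))"
          using A_nonneg i j by (intro mult_left_mono) auto
      qed
      finally have sge: "Ai i * psi \<beta> r \<le> s" .
      have "Bstar N A a * (abar N a + Astar N A) * psi \<beta> r / (Astar N A * psi \<beta> r + abar N a) \<le> s / (a i + s)"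
        using i an
        by (intro key_ineq[OF less_imp_le[OF Bstar_pos[OF an]] Bstar_le[OF i, of a] Astar_pos Astar_le[OF i] _ abar_ge[OF i, of a] psi_pos psi_le1[OF beta] sge]) auto
      then show ?thesis unfolding sum[unfolded s_def] s_def using alpha by (intro mult_left_mono) auto
    qed
    show "diam N v 0 * real (HH N A) < ?l * (r - diam N x 0)" by (rule c)
  qed
  show ?thesis by (rule flock)
qed

end



lemma lim1: "\<beta> < 1 \<Longrightarrow> 0 \<le> \<beta> \<Longrightarrow> filterlim (\<lambda>r::real. (r - X0) * (1 + r\<^sup>2) powr (-\<beta>/2)) at_top at_top"
  by real_asymp

lemma lim2: "((\<lambda>r::real. (r - X0) * (1 + r\<^sup>2) powr (-1/2)) \<longlongrightarrow> 1) at_top"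
  by real_asymp

lemma lim3: "0 < As \<Longrightarrow> 0 < ab \<Longrightarrow> ((\<lambda>r::real. (r - X0) * (1 + r\<^sup>2) powr (-1/2) / (As * (1 + r\<^sup>2) powr (-1/2) + ab)) \<longlongrightarrow> inverse ab) at_top"
  by real_asymp

lemma ev_ex: "eventually P (at_top::real filter) \<Longrightarrow> \<exists>r. P r"
  unfolding eventually_at_top_linorder by auto

lemma ex1: "\<beta> < 1 \<Longrightarrow> 0 \<le> \<beta> \<Longrightarrow> \<exists>r. K < (r - X0) * psi \<beta> r"
proof -
  assume b: "\<beta> < 1" "0 \<le> \<beta>"
  have "eventually (\<lambda>r. K + 1 \<le> (r - X0) * (1 + r\<^sup>2) powr (-\<beta>/2)) at_top"
    using lim1[OF b, of X0] unfolding filterlim_at_top by blast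
  then obtain r where "K + 1 \<le> (r - X0) * (1 + r\<^sup>2) powr (-\<beta>/2)" using ev_ex by blast
  then show ?thesis unfolding psi_def by (intro exI[of _ r]) simp
qed

lemma ex2: "K < 1 \<Longrightarrow> \<exists>r. K < (r - X0) * psi 1 r"
proof -
  assume "K < 1"
  from order_tendstoD(1)[OF lim2 this, of X0] obtain r where "K < (r - X0) * (1 + r\<^sup>2) powr (-1/2)"
    using ev_ex by blast
  then show ?thesis unfolding psi_def by (intro exI[of _ r]) simp
qed

lemma ex3: "0 < As \<Longrightarrow> 0 < ab \<Longrightarrow> K < inverse ab \<Longrightarrow> \<exists>r. K < (r - X0) * psi 1 r / (As * psi 1 r + ab)"
proof -
  assume a: "0 < As" "0 < ab" "K < inverse ab"
  from order_tendstoD(1)[OF lim3[OF a(1,2)] a(3), of X0] obtain r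
    where "K < (r - X0) * (1 + r\<^sup>2) powr (-1/2) / (As * (1 + r\<^sup>2) powr (-1/2) + ab)"
    using ev_ex by blast
  then show ?thesis unfolding psi_def by (intro exI[of _ r]) simp
qed

lemma psi_alt: "psi b r = 1 / (1 + r\<^sup>2) powr (b/2)"
  unfolding psi_def by (simp add: powr_minus_divide)


theorem corollary3p10:
  fixes N :: nat and \<alpha> \<beta> :: real and A :: "nat \<Rightarrow> nat \<Rightarrow> real"
  assumes N2: "N \<ge> 2" and alpha: "\<alpha> > 0" and beta: "\<beta> \<ge> 0"
    and A_nonneg: "\<forall>i\<in>{1..N}. \<forall>j\<in>{1..N}. A i j \<ge> 0"
    and A_lower: "\<forall>i\<in>{1..N}. \<forall>j\<in>{1..N}. A i j > 0 \<longrightarrow> j < i"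
    and A_leader: "\<forall>i\<in>{2..N}. \<exists>j\<in>{1..<i}. A i j > 0"
  shows
   "(\<forall>(x :: nat \<Rightarrow> real \<Rightarrow> 'a::euclidean_space) v. CS_solution N \<alpha> A \<beta> x v \<longrightarrow>
      ((\<beta> < 1 \<longrightarrow> flocking N x v) \<and>
       (\<beta> = 1 \<and> diam N v 0 < C_HL N \<alpha> A \<longrightarrow> flocking N x v) \<and>
       (\<beta> > 1 \<longrightarrow>
          (let X0 = diam N x 0;
               r = (sqrt ((\<beta> * X0)\<^sup>2 + 4 * (\<beta> - 1)) + \<beta> * X0) / (2 * (\<beta> - 1))
           in diam N v 0 < C_HL N \<alpha> A * (r - X0) / (1 + r\<^sup>2) powr (\<beta> / 2))
          \<longrightarrow> flocking N x v)))
  \<and>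
   (\<forall>(a :: nat \<Rightarrow> real). (\<forall>i\<in>{1..N}. a i \<ge> 0) \<longrightarrow>
      (\<forall>i\<in>{1..N}. (\<forall>j\<in>{1..N}-{i}. A i j = 0) \<longrightarrow> a i > 0) \<longrightarrow>
    (\<forall>(x :: nat \<Rightarrow> real \<Rightarrow> 'a::euclidean_space) v. MT_solution N \<alpha> A a \<beta> x v \<longrightarrow>
      ((abar N a = 0 \<or> \<beta> < 1 \<longrightarrow> flocking N x v) \<and>
       (abar N a > 0 \<and> \<beta> = 1 \<and>
          diam N v 0 < M_HL N \<alpha> A a * (abar N a + Astar N A) / abar N a
          \<longrightarrow> flocking N x v) \<and>
       (\<forall>r. abar N a > 0 \<and> \<beta> > 1 \<and> r \<ge> diam N x 0 \<and>
          (1 - \<beta>) * r\<^sup>2 + \<beta> * diam N x 0 * r + 1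
            = - (Astar N A / abar N a) * (1 + r\<^sup>2) powr (1 - \<beta> / 2) \<and>
          diam N v 0 < M_HL N \<alpha> A a * (abar N a + Astar N A) * (r - diam N x 0)
                        / (Astar N A + abar N a * (1 + r\<^sup>2) powr (\<beta> / 2))
          \<longrightarrow> flocking N x v))))"
proof -
  interpret hier N A using N2 A_nonneg A_lower A_leader by unfold_locales
  have H0: "0 < real (HH N A)" using HH_pos by simp
  have As0: "0 < Astar N A" by (rule Astar_pos)
  have CS: "CS_solution N \<alpha> A \<beta> x v \<longrightarrow>
      ((\<beta> < 1 \<longrightarrow> flocking N x v) \<and>
       (\<beta> = 1 \<and> diam N v 0 < C_HL N \<alpha> A \<longrightarrow> flocking N x v) \<and>
       (\<beta> > 1 \<longrightarrow>
          (let X0 = diam N x 0;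
               r = (sqrt ((\<beta> * X0)\<^sup>2 + 4 * (\<beta> - 1)) + \<beta> * X0) / (2 * (\<beta> - 1))
           in diam N v 0 < C_HL N \<alpha> A * (r - X0) / (1 + r\<^sup>2) powr (\<beta> / 2))
          \<longrightarrow> flocking N x v))" for x v :: "nat \<Rightarrow> real \<Rightarrow> 'a"
  proof (rule impI, intro conjI)
    assume sol: "CS_solution N \<alpha> A \<beta> x v"
    define c where "c = \<alpha> * Astar N A"
    have c0: "0 < c" unfolding c_def using alpha As0 by simp
    have gen: "flocking N x v" if "diam N v 0 * real (HH N A) / c < (r - diam N x 0) * psi \<beta> r" for r
    proof (rule CS_flock[OF alpha beta sol])
      have "diam N v 0 * real (HH N A) < (r - diam N x 0) * psi \<beta> r * c"
        using that c0 by (simp add: divide_less_eq)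
      then show "diam N v 0 * real (HH N A) < \<alpha> * Astar N A * psi \<beta> r * (r - diam N x 0)"
        unfolding c_def by (simp add: algebra_simps)
    qed
    show "\<beta> < 1 \<longrightarrow> flocking N x v"
      using ex1[of \<beta>] beta gen by blast
    show "\<beta> = 1 \<and> diam N v 0 < C_HL N \<alpha> A \<longrightarrow> flocking N x v"
    proof
      assume b: "\<beta> = 1 \<and> diam N v 0 < C_HL N \<alpha> A"
      have "diam N v 0 * real (HH N A) / c < 1"
        using b H0 c0 unfolding C_HL_def c_def by (simp add: divide_less_eq less_divide_eq mult.commute)
      then show "flocking N x v" using ex2 gen b by blast
    qed
    show "(\<beta> > 1 \<longrightarrow>
          (let X0 = diam N x 0;
               r = (sqrt ((\<beta> * X0)\<^sup>2 + 4 * (\<beta> - 1)) + \<beta> * X0) / (2 * (\<beta> - 1))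
           in diam N v 0 < C_HL N \<alpha> A * (r - X0) / (1 + r\<^sup>2) powr (\<beta> / 2))
          \<longrightarrow> flocking N x v)"
    proof (intro impI)
      define r where "r = (sqrt ((\<beta> * diam N x 0)\<^sup>2 + 4 * (\<beta> - 1)) + \<beta> * diam N x 0) / (2 * (\<beta> - 1))"
      assume "(let X0 = diam N x 0;
               r = (sqrt ((\<beta> * X0)\<^sup>2 + 4 * (\<beta> - 1)) + \<beta> * X0) / (2 * (\<beta> - 1))
           in diam N v 0 < C_HL N \<alpha> A * (r - X0) / (1 + r\<^sup>2) powr (\<beta> / 2))"
      then have h: "diam N v 0 < C_HL N \<alpha> A * (r - diam N x 0) / (1 + r\<^sup>2) powr (\<beta> / 2)"
        unfolding r_def Let_def .
      have "diam N v 0 < c / real (HH N A) * ((r - diam N x 0) * psi \<beta> r)"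
        using h unfolding C_HL_def c_def psi_alt by simp
      then have "diam N v 0 * real (HH N A) / c < (r - diam N x 0) * psi \<beta> r"
        using H0 c0 by (simp add: divide_less_eq less_divide_eq field_simps)
      then show "flocking N x v" by (rule gen)
    qed
  qed
  have MT: "MT_solution N \<alpha> A a \<beta> x v \<longrightarrow>
      ((abar N a = 0 \<or> \<beta> < 1 \<longrightarrow> flocking N x v) \<and>
       (abar N a > 0 \<and> \<beta> = 1 \<and>
          diam N v 0 < M_HL N \<alpha> A a * (abar N a + Astar N A) / abar N a
          \<longrightarrow> flocking N x v) \<and>
       (\<forall>r. abar N a > 0 \<and> \<beta> > 1 \<and> r \<ge> diam N x 0 \<and>
          (1 - \<beta>) * r\<^sup>2 + \<beta> * diam N x 0 * r + 1
            = - (Astar N A / abar N a) * (1 + r\<^sup>2) powr (1 - \<beta> / 2) \<and>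
          diam N v 0 < M_HL N \<alpha> A a * (abar N a + Astar N A) * (r - diam N x 0)
                        / (Astar N A + abar N a * (1 + r\<^sup>2) powr (\<beta> / 2))
          \<longrightarrow> flocking N x v))"
    if an: "\<forall>i\<in>{1..N}. a i \<ge> 0" for a :: "nat \<Rightarrow> real" and x v :: "nat \<Rightarrow> real \<Rightarrow> 'a"
  proof (rule impI, intro conjI allI)
    assume sol: "MT_solution N \<alpha> A a \<beta> x v"
    define B where "B = Bstar N A a"
    define ab where "ab = abar N a"
    define As where "As = Astar N A"
    have B0: "0 < B" unfolding B_def by (rule Bstar_pos[OF an])
    have ab0: "0 \<le> ab" unfolding ab_def by (rule abar_nonneg[OF an])
    have As0': "0 < As" unfolding As_def by (rule As0)
    have gen: "flocking N x v"
      if "diam N v 0 * real (HH N A) < \<alpha> * (B * (ab + As) * psi \<beta> r / (As * psi \<beta> r + ab)) * (r - diam N x 0)" for r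
      by (rule MT_flock[OF alpha beta an sol]) (use that in \<open>simp add: B_def ab_def As_def\<close>)
    show "abar N a = 0 \<or> \<beta> < 1 \<longrightarrow> flocking N x v"
    proof
      assume "abar N a = 0 \<or> \<beta> < 1"
      then show "flocking N x v"
      proof
        assume a0: "abar N a = 0"
        define r where "r = diam N x 0 + diam N v 0 * real (HH N A) / (\<alpha> * B) + 1"
        have p: "0 < As * psi \<beta> r" using As0' psi_pos[of \<beta> r] by simp
        have "\<alpha> * (B * (ab + As) * psi \<beta> r / (As * psi \<beta> r + ab)) = \<alpha> * B"
          using a0 p psi_pos[of \<beta> r] As0' unfolding ab_def by (simp add: field_simps)
        moreover have "diam N v 0 * real (HH N A) < \<alpha> * B * (r - diam N x 0)"
          unfolding r_def using alpha B0 by (simp add: field_simps)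
        ultimately show "flocking N x v" using gen[of r] by simp
      next
        assume b1: "\<beta> < 1"
        obtain r where r: "diam N v 0 * real (HH N A) / (\<alpha> * B) < (r - diam N x 0) * psi \<beta> r"
          using ex1[OF b1 beta] by blast
        have K0: "0 \<le> diam N v 0 * real (HH N A) / (\<alpha> * B)"
          using diam_nonneg[of N v 0] N2 alpha B0 by simp
        have rX: "0 \<le> r - diam N x 0"
        proof (rule ccontr)
          assume "\<not> 0 \<le> r - diam N x 0"
          then have "(r - diam N x 0) * psi \<beta> r < 0" using psi_pos[of \<beta> r] by (simp add: mult_neg_pos)
          then show False using r K0 by simp
        qed
        have p: "0 < psi \<beta> r" "psi \<beta> r \<le> 1" using psi_pos psi_le1[OF beta] by auto
        have "B * psi \<beta> r \<le> B * (ab + As) * psi \<beta> r / (As * psi \<beta> r + ab)"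
        proof -
          have d: "0 < As * psi \<beta> r + ab" using As0' p ab0 by (simp add: add_pos_nonneg)
          have "As * psi \<beta> r \<le> As" using p As0' by (simp add: mult_left_le)
          then have "B * psi \<beta> r * (As * psi \<beta> r + ab) \<le> B * psi \<beta> r * (ab + As)"
            using B0 p by (intro mult_left_mono) auto
          then show ?thesis using d by (simp add: le_divide_eq algebra_simps)
        qed
        then have "\<alpha> * (B * psi \<beta> r) * (r - diam N x 0) \<le> \<alpha> * (B * (ab + As) * psi \<beta> r / (As * psi \<beta> r + ab)) * (r - diam N x 0)"
          by (intro mult_right_mono mult_left_mono) (use alpha rX in auto)
        moreover have "diam N v 0 * real (HH N A) < \<alpha> * (B * psi \<beta> r) * (r - diam N x 0)"
        proof -
          have "diam N v 0 * real (HH N A) < (r - diam N x 0) * psi \<beta> r * (\<alpha> * B)"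
            using r alpha B0 by (simp add: divide_less_eq)
          then show ?thesis by (simp add: algebra_simps)
        qed
        ultimately show "flocking N x v" using gen[of r] by linarith
      qed
    qed
    show "abar N a > 0 \<and> \<beta> = 1 \<and>
          diam N v 0 < M_HL N \<alpha> A a * (abar N a + Astar N A) / abar N a
          \<longrightarrow> flocking N x v"
    proof
      assume h: "abar N a > 0 \<and> \<beta> = 1 \<and>
          diam N v 0 < M_HL N \<alpha> A a * (abar N a + Astar N A) / abar N a"
      have abp: "0 < ab" using h unfolding ab_def by simp
      have cpos: "0 < \<alpha> * B * (ab + As)" using alpha B0 abp As0' by simp
      have "diam N v 0 < \<alpha> * B * (ab + As) / (real (HH N A) * ab)"
        using h unfolding M_HL_def B_def ab_def As_def by simp
      then have "diam N v 0 * real (HH N A) / (\<alpha> * B * (ab + As)) < inverse ab"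
        using H0 abp cpos by (simp add: field_simps)
      then obtain r where r: "diam N v 0 * real (HH N A) / (\<alpha> * B * (ab + As)) < (r - diam N x 0) * psi 1 r / (As * psi 1 r + ab)"
        using ex3[OF As0' abp] by blast
      have "diam N v 0 * real (HH N A) < \<alpha> * B * (ab + As) * ((r - diam N x 0) * psi 1 r / (As * psi 1 r + ab))"
        using r cpos by (simp add: divide_less_eq mult.commute)
      then show "flocking N x v" using gen[of r] h by (simp add: algebra_simps)
    qed
    fix r
    show "abar N a > 0 \<and> \<beta> > 1 \<and> r \<ge> diam N x 0 \<and>
          (1 - \<beta>) * r\<^sup>2 + \<beta> * diam N x 0 * r + 1
            = - (Astar N A / abar N a) * (1 + r\<^sup>2) powr (1 - \<beta> / 2) \<and>
          diam N v 0 < M_HL N \<alpha> A a * (abar N a + Astar N A) * (r - diam N x 0)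
                        / (Astar N A + abar N a * (1 + r\<^sup>2) powr (\<beta> / 2))
          \<longrightarrow> flocking N x v"
    proof
      assume h: "abar N a > 0 \<and> \<beta> > 1 \<and> r \<ge> diam N x 0 \<and>
          (1 - \<beta>) * r\<^sup>2 + \<beta> * diam N x 0 * r + 1
            = - (Astar N A / abar N a) * (1 + r\<^sup>2) powr (1 - \<beta> / 2) \<and>
          diam N v 0 < M_HL N \<alpha> A a * (abar N a + Astar N A) * (r - diam N x 0)
                        / (Astar N A + abar N a * (1 + r\<^sup>2) powr (\<beta> / 2))"
      define P where "P = (1 + r\<^sup>2) powr (\<beta> / 2)"
      have "0 < 1 + r\<^sup>2" by (simp add: add_pos_nonneg)
      then have P0: "0 < P" unfolding P_def by simp
      have abp: "0 < ab" using h unfolding ab_def by simp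
      have d: "0 < As + ab * P" using As0' abp P0 by (simp add: add_pos_pos)
      have ps: "psi \<beta> r = 1 / P" unfolding P_def by (rule psi_alt)
      have e: "\<alpha> * (B * (ab + As) * psi \<beta> r / (As * psi \<beta> r + ab)) = \<alpha> * B * (ab + As) / (As + ab * P)"
      proof -
        have d': "As * (1/P) + ab = (As + ab*P)/P" using P0 by (simp add: field_simps)
        have "B * (ab + As) * (1/P) / (As * (1/P) + ab) = (B * (ab + As) / P) / ((As + ab*P)/P)"
          unfolding d' by simp
        also have "\<dots> = B * (ab + As) / (As + ab*P)" using P0 by simp
        finally have X: "B * (ab + As) * (1/P) / (As * (1/P) + ab) = B * (ab + As) / (As + ab*P)" .
        show ?thesis unfolding ps X by simp
      qed
      have "diam N v 0 < \<alpha> * B / real (HH N A) * (ab + As) * (r - diam N x 0) / (As + ab * P)"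
        using h unfolding M_HL_def B_def ab_def As_def P_def by simp
      moreover have "\<alpha> * B / real (HH N A) * (ab + As) * (r - diam N x 0) / (As + ab * P)
          = (\<alpha> * B * (ab + As) / (As + ab * P) * (r - diam N x 0)) / real (HH N A)"
        using H0 d by (simp add: field_simps)
      ultimately have "diam N v 0 < (\<alpha> * B * (ab + As) / (As + ab * P) * (r - diam N x 0)) / real (HH N A)"
        by (simp only:)
      then have "diam N v 0 * real (HH N A) < \<alpha> * B * (ab + As) / (As + ab * P) * (r - diam N x 0)"
        using pos_less_divide_eq[OF H0] by blast
      then have Y: "diam N v 0 * real (HH N A) < \<alpha> * B * (ab + As) / (As + ab * P) * (r - diam N x 0)" .
      show "flocking N x v" by (rule gen[of r]) (unfold e, rule Y)
    qed
  qed
  show ?thesis using CS MT by blast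
qed
end
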